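(* Let $\mathbb{G}$ be a partially commutative group, $x$ one of its canonical generators, $n\ge 2$, and let $\mathbb{H}=\langle \mathbb{G}, A\mid [A,C_{\mathbb{G}}(x)]=1\rangle$, where $A\cong\mathbb{Z}^{n-1}$ is free abelian (i.e. $\mathbb{H}$ is obtained from $\mathbb{G}$ by adjoining a free abelian group $A$ of rank $n-1$ whose elements commute with every element of the centraliser $C_{\mathbb{G}}(x)$). Then $\mathbb{H}$ is discriminated by $\mathbb{G}$.
   Context: A partially commutative group is $\mathbb{G}(\Gamma)=\langle V(\Gamma)\mid [x,y]=1 \text{ for } (x,y)\in E(\Gamma)\rangle$ for a finite simplicial graph $\Gamma$; its canonical generators are the elements of $V(\Gamma)$. A group $H$ is discriminated by $G$ if for every finite set $S\subseteq H$ there is a homomorphism $H\to G$ that is injective on $S$. *)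

theory Defs
  imports "HOL-Algebra.Group"
begin

text \<open>Group presentations. A letter is a pair (g, b) where b = True means the
inverse of the generator g. Words over a generator set X are lists of letters
from X.\<close>

type_synonym 'g word = "('g \<times> bool) list"

definition words :: "'g set \<Rightarrow> 'g word set" where
  "words X = {w. \<forall>l \<in> set w. fst l \<in> X}"

definition word_inv :: "'g word \<Rightarrow> 'g word" where
  "word_inv w = rev (map (\<lambda>(g, b). (g, \<not> b)) w)"

definition commutator_word :: "'g word \<Rightarrow> 'g word \<Rightarrow> 'g word" where
  "commutator_word u v = u @ v @ word_inv u @ word_inv v"

inductive_set pres_rel :: "'g set \<Rightarrow> 'g word set \<Rightarrow> ('g word \<times> 'g word) set"
  for X :: "'g set" and R :: "'g word set" where
  refl: "w \<in> words X \<Longrightarrow> (w, w) \<in> pres_rel X R"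
| sym: "(u, v) \<in> pres_rel X R \<Longrightarrow> (v, u) \<in> pres_rel X R"
| trans: "(u, v) \<in> pres_rel X R \<Longrightarrow> (v, w) \<in> pres_rel X R \<Longrightarrow> (u, w) \<in> pres_rel X R"
| cancel: "u \<in> words X \<Longrightarrow> v \<in> words X \<Longrightarrow> a \<in> X \<Longrightarrow>
     (u @ [(a, b), (a, \<not> b)] @ v, u @ v) \<in> pres_rel X R"
| relator: "u \<in> words X \<Longrightarrow> v \<in> words X \<Longrightarrow> r \<in> R \<Longrightarrow> r \<in> words X \<Longrightarrow>
     (u @ r @ v, u @ v) \<in> pres_rel X R"

definition presented_group :: "'g set \<Rightarrow> 'g word set \<Rightarrow> ('g word set) monoid" where
  "presented_group X R =
    \<lparr> carrier = words X // pres_rel X R,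
      monoid.mult = (\<lambda>A B. pres_rel X R `` {(SOME a. a \<in> A) @ (SOME b. b \<in> B)}),
      one = pres_rel X R `` {[]} \<rparr>"

definition pc_relators :: "'v set \<Rightarrow> ('v \<times> 'v) set \<Rightarrow> 'v word set" where
  "pc_relators V E = {commutator_word [(x, False)] [(y, False)] | x y. (x, y) \<in> E}"

definition pc_group :: "'v set \<Rightarrow> ('v \<times> 'v) set \<Rightarrow> ('v word set) monoid" where
  "pc_group V E = presented_group V (pc_relators V E)"

definition simplicial_graph :: "'v set \<Rightarrow> ('v \<times> 'v) set \<Rightarrow> bool" where
  "simplicial_graph V E \<longleftrightarrow> finite V \<and> E \<subseteq> V \<times> V \<and> sym E \<and> irrefl E"

definition centralizer :: "('a, 'b) monoid_scheme \<Rightarrow> 'a \<Rightarrow> 'a set" where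
  "centralizer G g = {c \<in> carrier G. c \<otimes>\<^bsub>G\<^esub> g = g \<otimes>\<^bsub>G\<^esub> c}"

text \<open>The group H = < G, A | [A, C_G(x)] = 1 > with A free abelian of rank m,
with basis the generators Inr i, i < m. Generators of G are Inl v.\<close>

definition ext_gens :: "'v set \<Rightarrow> nat \<Rightarrow> ('v + nat) set" where
  "ext_gens V m = Inl ` V \<union> Inr ` {..<m}"

definition lift_word :: "'v word \<Rightarrow> ('v + nat) word" where
  "lift_word w = map (\<lambda>(g, b). (Inl g, b)) w"

definition ext_relators :: "'v set \<Rightarrow> ('v \<times> 'v) set \<Rightarrow> 'v \<Rightarrow> nat \<Rightarrow> ('v + nat) word set" where
  "ext_relators V E x m =
     lift_word ` pc_relators V E
     \<union> {commutator_word [(Inr i, False)] [(Inr j, False)] | i j. i < m \<and> j < m}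
     \<union> {commutator_word [(Inr i, False)] (lift_word c) | i c.
          i < m \<and> c \<in> words V \<and>
          pres_rel V (pc_relators V E) `` {c} \<in> centralizer (pc_group V E) (pres_rel V (pc_relators V E) `` {[(x, False)]})}"

definition ext_group :: "'v set \<Rightarrow> ('v \<times> 'v) set \<Rightarrow> 'v \<Rightarrow> nat \<Rightarrow> (('v + nat) word set) monoid" where
  "ext_group V E x m = presented_group (ext_gens V m) (ext_relators V E x m)"

definition discriminated_by :: "('a, 'c) monoid_scheme \<Rightarrow> ('b, 'd) monoid_scheme \<Rightarrow> bool" where
  "discriminated_by H G \<longleftrightarrow>
     (\<forall>S. S \<subseteq> carrier H \<and> finite S \<longrightarrow> (\<exists>h \<in> hom H G. inj_on h S))"

end

theory Submission
  imports Defs "HOL-Computational_Algebra.Polynomial"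
begin

lemma words_Nil[simp]: "[] \<in> words X" by (simp add: words_def)
lemma words_Cons[simp]: "l # u \<in> words X \<longleftrightarrow> fst l \<in> X \<and> u \<in> words X" by (auto simp: words_def)
lemma words_append[simp]: "u @ v \<in> words X \<longleftrightarrow> u \<in> words X \<and> v \<in> words X" by (auto simp: words_def)

lemma pres_rel_words: "(u,v) \<in> pres_rel X R \<Longrightarrow> u \<in> words X \<and> v \<in> words X"
  by (induction rule: pres_rel.induct) auto

lemma pres_rel_cong:
  assumes "(u,v) \<in> pres_rel X R" "p \<in> words X" "q \<in> words X"
  shows "(p@u@q, p@v@q) \<in> pres_rel X R"
  using assms
proof (induction rule: pres_rel.induct)
  case (refl w) then show ?case by (intro pres_rel.refl) simp
next
  case (sym u v) then show ?case by (blast intro: pres_rel.sym)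
next
  case (trans u v w) then show ?case by (blast intro: pres_rel.trans)
next
  case (cancel u v a b) then show ?case using pres_rel.cancel[of "p@u" X "v@q" a b R] by simp
next
  case (relator u v r) then show ?case using pres_rel.relator[of "p@u" X "v@q" r R] by simp
qed

lemma pres_rel_refl': "w \<in> words X \<Longrightarrow> (w,w) \<in> pres_rel X R" by (rule pres_rel.refl)

lemma equiv_pres: "equiv (words X) (pres_rel X R)"
proof (rule equivI)
  show "refl_on (words X) (pres_rel X R)"
    unfolding refl_on_def using pres_rel_words by (blast intro: pres_rel.intros)
  show "sym (pres_rel X R)" unfolding sym_def by (blast intro: pres_rel.intros)
  show "trans (pres_rel X R)" unfolding trans_def by (blast intro: pres_rel.intros)
  show "pres_rel X R \<subseteq> words X \<times> words X" using pres_rel_words by auto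
qed

lemma pres_cancel': "p \<in> words X \<Longrightarrow> q \<in> words X \<Longrightarrow> a \<in> X \<Longrightarrow> (p @ (a,b) # (a, \<not>b) # q, p @ q) \<in> pres_rel X R"
  using pres_rel.cancel[of p X q a b R] by simp

lemma pres_trans: "(u,v) \<in> pres_rel X R \<Longrightarrow> (v,w) \<in> pres_rel X R \<Longrightarrow> (u,w) \<in> pres_rel X R"
  by (rule pres_rel.trans)
lemma pres_sym: "(u,v) \<in> pres_rel X R \<Longrightarrow> (v,u) \<in> pres_rel X R"
  by (rule pres_rel.sym)

definition linv :: "'g \<times> bool \<Rightarrow> 'g \<times> bool" where "linv l = (fst l, \<not> snd l)"

lemma word_inv_Nil[simp]: "word_inv [] = []" by (simp add: word_inv_def)
lemma word_inv_Cons[simp]: "word_inv (l # w) = word_inv w @ [linv l]"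
  by (cases l) (simp add: word_inv_def linv_def)
lemma word_inv_append[simp]: "word_inv (u @ w) = word_inv w @ word_inv u"
  by (simp add: word_inv_def)
lemma word_inv_inv[simp]: "word_inv (word_inv w) = w"
  by (induction w) (auto simp: linv_def)
lemma word_inv_words[simp]: "word_inv w \<in> words X \<longleftrightarrow> w \<in> words X"
  by (induction w) (auto simp: linv_def)

lemma pres_free_cancel:
  "w \<in> words X \<Longrightarrow> p \<in> words X \<Longrightarrow> q \<in> words X \<Longrightarrow> (p @ w @ word_inv w @ q, p @ q) \<in> pres_rel X R"
proof (induction w arbitrary: p q)
  case Nil then show ?case by (simp add: pres_rel.refl)
next
  case (Cons l w)
  have 1: "(p @ l # (w @ word_inv w) @ linv l # q, p @ l # linv l # q) \<in> pres_rel X R"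
    using pres_rel_cong[OF Cons.IH[of "[]" "[]"], of "p @ [l]" "linv l # q"] Cons.prems
    by (simp add: linv_def)
  have 2: "(p @ l # linv l # q, p @ q) \<in> pres_rel X R"
    using pres_cancel'[where p=p and X=X and q=q and a="fst l" and R=R and b="snd l"] Cons.prems by (cases l) (simp add: linv_def)
  show ?case using pres_trans[OF 1 2] by simp
qed

locale gst =
  fixes E :: "('v \<times> 'v) set"
  assumes symE: "sym E" and irrE: "irrefl E"
begin

lemma E_sym: "(a,b) \<in> E \<Longrightarrow> (b,a) \<in> E" using symE by (auto simp: sym_def)
lemma E_irr[simp]: "(a,a) \<notin> E" using irrE by (auto simp: irrefl_def)

definition vis :: "'v \<Rightarrow> bool \<Rightarrow> ('v \<times> bool) list \<Rightarrow> bool" where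
  "vis v e u \<longleftrightarrow> (\<exists>p r. u = p @ (v,e) # r \<and> (\<forall>z\<in>set p. (v, fst z) \<in> E))"

fun red :: "('v \<times> bool) list \<Rightarrow> bool" where
  "red [] = True"
| "red (l # r) = (\<not> vis (fst l) (\<not> snd l) r \<and> red r)"

definition proj :: "('v \<times> bool) list \<Rightarrow> 'v \<Rightarrow> 'v \<Rightarrow> ('v \<times> bool) list" where
  "proj u a b = (if (a,b) \<in> E then [] else filter (\<lambda>z. fst z = a \<or> fst z = b) u)"

definition popc :: "'v \<Rightarrow> bool \<Rightarrow> ('v \<Rightarrow> 'v \<Rightarrow> ('v \<times> bool) list) \<Rightarrow> bool" where
  "popc v e s \<longleftrightarrow> (\<forall>w. (v,w) \<notin> E \<longrightarrow> s v w \<noteq> [] \<and> hd (s v w) = (v, \<not> e))"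

definition opst :: "'v \<times> bool \<Rightarrow> ('v \<Rightarrow> 'v \<Rightarrow> ('v \<times> bool) list) \<Rightarrow> ('v \<Rightarrow> 'v \<Rightarrow> ('v \<times> bool) list)" where
  "opst l s = (if popc (fst l) (snd l) s
     then (\<lambda>a b. if (a,b) \<notin> E \<and> (a = fst l \<or> b = fst l) then tl (s a b) else s a b)
     else (\<lambda>a b. if (a,b) \<notin> E \<and> (a = fst l \<or> b = fst l) then l # s a b else s a b))"

fun act :: "('v \<times> bool) list \<Rightarrow> ('v \<Rightarrow> 'v \<Rightarrow> ('v \<times> bool) list) \<Rightarrow> ('v \<Rightarrow> 'v \<Rightarrow> ('v \<times> bool) list)" where
  "act [] s = s"
| "act (l # w) s = opst l (act w s)"

definition St where "St = {proj u | u. red u}"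

lemma filter_adj_nil:
  assumes "\<forall>z\<in>set p. (v, fst z) \<in> E" "(a,b) \<notin> E" "a = v \<or> b = v"
  shows "filter (\<lambda>z. fst z = a \<or> fst z = b) p = []"
  using assms by (auto simp: filter_empty_conv dest: E_sym)

lemma popc_iff: "popc v e (proj u) \<longleftrightarrow> vis v (\<not> e) u"
proof
  assume "vis v (\<not> e) u"
  then obtain p r where u: "u = p @ (v,\<not>e) # r" and p: "\<forall>z\<in>set p. (v, fst z) \<in> E"
    by (auto simp: vis_def)
  show "popc v e (proj u)" unfolding popc_def proj_def
  proof (intro allI impI)
    fix w assume "(v,w) \<notin> E"
    then have "filter (\<lambda>z. fst z = v \<or> fst z = w) p = []" using filter_adj_nil[OF p] by blast
    then show "(if (v, w) \<in> E then [] else filter (\<lambda>z. fst z = v \<or> fst z = w) u) \<noteq> [] \<and>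
      hd (if (v, w) \<in> E then [] else filter (\<lambda>z. fst z = v \<or> fst z = w) u) = (v, \<not> e)"
      using \<open>(v,w) \<notin> E\<close> u by simp
  qed
next
  assume pc: "popc v e (proj u)"
  define p where "p = takeWhile (\<lambda>z. (v, fst z) \<in> E) u"
  define q where "q = dropWhile (\<lambda>z. (v, fst z) \<in> E) u"
  have u: "u = p @ q" by (simp add: p_def q_def)
  have p: "\<forall>z\<in>set p. (v, fst z) \<in> E" unfolding p_def by (meson set_takeWhileD)
  show "vis v (\<not> e) u"
  proof (cases q)
    case Nil
    have "filter (\<lambda>z. fst z = v \<or> fst z = v) p = []" using filter_adj_nil[OF p, of v v] by simp
    then show ?thesis using pc u Nil unfolding popc_def proj_def by (auto dest: spec[of _ v])
  next
    case (Cons z r)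
    have nz: "(v, fst z) \<notin> E" using Cons q_def
      by (metis dropWhile_eq_Cons_conv)
    have "filter (\<lambda>y. fst y = v \<or> fst y = fst z) p = []" using filter_adj_nil[OF p nz] by simp
    then have "hd (proj u v (fst z)) = z" using nz u Cons by (simp add: proj_def)
    moreover have "hd (proj u v (fst z)) = (v, \<not>e)" using pc nz unfolding popc_def by blast
    ultimately have "z = (v, \<not>e)" by simp
    then show ?thesis using u Cons p unfolding vis_def by auto
  qed
qed

lemma op_pop:
  assumes u: "u = p @ (v,\<not>e) # r" and p: "\<forall>z\<in>set p. (v, fst z) \<in> E"
  shows "opst (v,e) (proj u) = proj (p @ r)"
proof -
  have pc: "popc v e (proj u)" using popc_iff[of v e u] u p unfolding vis_def by blast
  show ?thesis
  proof (intro ext)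
    fix a b
    show "opst (v,e) (proj u) a b = proj (p @ r) a b"
    proof (cases "(a,b) \<notin> E \<and> (a = v \<or> b = v)")
      case True
      then have "filter (\<lambda>z. fst z = a \<or> fst z = b) p = []" using filter_adj_nil[OF p] by blast
      then show ?thesis using True pc u by (auto simp: opst_def proj_def)
    next
      case False
      then show ?thesis using pc u by (auto simp: opst_def proj_def)
    qed
  qed
qed

lemma op_push:
  assumes "\<not> vis v (\<not>e) u"
  shows "opst (v,e) (proj u) = proj ((v,e) # u)"
proof -
  have pc: "\<not> popc v e (proj u)" using popc_iff[of v e u] assms by blast
  show ?thesis by (intro ext) (auto simp: opst_def proj_def pc)
qed

lemma red_append: "red (a @ b) \<Longrightarrow> red b"
  by (induction a) auto

lemma vis_insert:
  assumes "vis v e (a @ b)" "(v, fst l) \<in> E"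
  shows "vis v e (a @ l # b)"
proof -
  obtain p r where pr: "a @ b = p @ (v,e) # r" and p: "\<forall>z\<in>set p. (v, fst z) \<in> E"
    using assms(1) by (auto simp: vis_def)
  from pr obtain us where "(a = p @ us \<and> us @ b = (v,e) # r) \<or> (a @ us = p \<and> b = us @ (v,e) # r)"
    by (auto simp: append_eq_append_conv2)
  then show ?thesis
  proof (elim disjE)
    assume 1: "a = p @ us \<and> us @ b = (v,e) # r"
    show ?thesis
    proof (cases us)
      case Nil
      then show ?thesis using 1 p assms(2) unfolding vis_def
        by (intro exI[of _ "a @ [l]"] exI[of _ r]) auto
    next
      case (Cons y ys)
      then show ?thesis using 1 p unfolding vis_def
        by (intro exI[of _ p] exI[of _ "ys @ l # b"]) auto
    qed
  next
    assume 2: "a @ us = p \<and> b = us @ (v,e) # r"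
    then show ?thesis using p assms(2) unfolding vis_def
      by (intro exI[of _ "a @ l # us"] exI[of _ r]) auto
  qed
qed

lemma red_del:
  "red (p @ l # r) \<Longrightarrow> \<forall>z\<in>set p. (fst l, fst z) \<in> E \<Longrightarrow> red (p @ r)"
proof (induction p)
  case Nil then show ?case by simp
next
  case (Cons y p)
  have "(fst y, fst l) \<in> E" using Cons.prems(2) by (auto dest: E_sym)
  then have "\<not> vis (fst y) (\<not> snd y) (p @ r)"
    using Cons.prems(1) vis_insert[of "fst y" "\<not> snd y" p r l] by auto
  then show ?case using Cons by auto
qed

lemma vis_skip:
  assumes "vis v e (p @ r)" "\<forall>z\<in>set p. (v, fst z) \<in> E"
  shows "vis v e r"
proof -
  obtain q s where qs: "p @ r = q @ (v,e) # s" and q: "\<forall>z\<in>set q. (v, fst z) \<in> E"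
    using assms(1) by (auto simp: vis_def)
  from qs obtain us where "(p = q @ us \<and> us @ r = (v,e) # s) \<or> (p @ us = q \<and> r = us @ (v,e) # s)"
    by (auto simp: append_eq_append_conv2)
  then show ?thesis
  proof (elim disjE)
    assume 2: "p = q @ us \<and> us @ r = (v,e) # s"
    show ?thesis
    proof (cases us)
      case Nil
      then show ?thesis using 2 unfolding vis_def by (intro exI[of _ "[]"] exI[of _ s]) auto
    next
      case (Cons y ys)
      then have "(v,e) \<in> set p" using 2 by auto
      then show ?thesis using assms(2) by force
    qed
  next
    assume 1: "p @ us = q \<and> r = us @ (v,e) # s"
    then show ?thesis using q unfolding vis_def
      by (intro exI[of _ us] exI[of _ s]) auto
  qed
qed

lemma proj_shift:
  assumes "\<forall>z\<in>set p. (v, fst z) \<in> E"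
  shows "proj (p @ (v,e) # r) = proj ((v,e) # p @ r)"
proof (intro ext)
  fix a b
  show "proj (p @ (v,e) # r) a b = proj ((v,e) # p @ r) a b"
  proof (cases "(a,b) \<notin> E \<and> (a = v \<or> b = v)")
    case True
    then have "filter (\<lambda>z. fst z = a \<or> fst z = b) p = []" using filter_adj_nil[OF assms] by blast
    then show ?thesis using True by (auto simp: proj_def)
  next
    case False
    then show ?thesis by (auto simp: proj_def)
  qed
qed

lemma op_St: "s \<in> St \<Longrightarrow> opst l s \<in> St"
proof -
  assume "s \<in> St"
  then obtain u where s: "s = proj u" and r: "red u" by (auto simp: St_def)
  obtain v e where l: "l = (v,e)" by (cases l)
  show ?thesis
  proof (cases "vis v (\<not>e) u")
    case True
    then obtain p q where u: "u = p @ (v,\<not>e) # q" and p: "\<forall>z\<in>set p. (v, fst z) \<in> E"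
      by (auto simp: vis_def)
    have "red (p @ q)" using red_del[of p "(v,\<not>e)" q] r u p by auto
    then show ?thesis using op_pop[OF u p] s l by (auto simp: St_def)
  next
    case False
    then show ?thesis using op_push[OF False] s l r by (auto simp: St_def)
  qed
qed

lemma R1: "s \<in> St \<Longrightarrow> opst (v,\<not>e) (opst (v,e) s) = s"
proof -
  assume "s \<in> St"
  then obtain u where s: "s = proj u" and r: "red u" by (auto simp: St_def)
  show ?thesis
  proof (cases "vis v (\<not>e) u")
    case True
    then obtain p q where u: "u = p @ (v,\<not>e) # q" and p: "\<forall>z\<in>set p. (v, fst z) \<in> E"
      by (auto simp: vis_def)
    have "red ((v,\<not>e) # q)" using r u red_append by blast
    then have nq: "\<not> vis v e q" by simp
    have "\<not> vis v (\<not>\<not>e) (p @ q)" using vis_skip[of v e p q] p nq by auto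
    then have "opst (v,\<not>e) (proj (p @ q)) = proj ((v,\<not>e) # p @ q)" using op_push by blast
    also have "\<dots> = proj u" using proj_shift[OF p] u by simp
    finally show ?thesis using op_pop[OF u p] s by simp
  next
    case False
    have "opst (v,\<not>e) (proj ((v,e) # u)) = proj ([] @ u)"
      using op_pop[of "(v,e) # u" "[]" v "\<not>e" u] by simp
    then show ?thesis using op_push[OF False] s by simp
  qed
qed

lemma R2:
  assumes "(v,a) \<in> E"
  shows "opst (v,e) (opst (a,d) s) = opst (a,d) (opst (v,e) s)"
proof -
  have va: "v \<noteq> a" using assms by auto
  have av: "(a,v) \<in> E" using assms E_sym by blast
  have p1: "popc v e (opst (a,d) s) = popc v e s"
    unfolding popc_def opst_def using assms va by auto
  have p2: "popc a d (opst (v,e) s) = popc a d s"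
    unfolding popc_def opst_def using av va by auto
  show ?thesis
    apply (intro ext)
    using p1 p2 assms av va by (auto simp: opst_def)
qed

lemma act_append: "act (u @ w) s = act u (act w s)"
  by (induction u) auto

lemma act_St: "s \<in> St \<Longrightarrow> act w s \<in> St"
  by (induction w) (auto intro: op_St)

lemma proj_nil_St: "proj [] \<in> St" by (auto simp: St_def intro: exI[of _ "[]"])

lemma act_rel:
  assumes "(w, w') \<in> pres_rel X R"
    and "R \<subseteq> {commutator_word [(a,False)] [(b,False)] | a b. (a,b) \<in> E}"
  shows "\<forall>s\<in>St. act w s = act w' s"
  using assms(1)
proof (induction rule: pres_rel.induct)
  case (cancel u v a b)
  show ?case
  proof
    fix s assume "s \<in> St"
    then have "act v s \<in> St" by (rule act_St)
    then have "opst (a,b) (opst (a,\<not>b) (act v s)) = act v s"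
      using R1[of "act v s" a "\<not> b"] by simp
    then show "act (u @ [(a, b), (a, \<not> b)] @ v) s = act (u @ v) s"
      by (simp add: act_append)
  qed
next
  case (relator u v r)
  then obtain a b where r: "r = commutator_word [(a,False)] [(b,False)]" and ab: "(a,b) \<in> E"
    using assms(2) by blast
  show ?case
  proof
    fix s assume "s \<in> St"
    then have t: "act v s \<in> St" by (rule act_St)
    have ba: "(b,a) \<in> E" using ab E_sym by blast
    have "act r (act v s) = opst (a,False) (opst (a,True) (opst (b,False) (opst (b,True) (act v s))))"
      using R2[OF ba, of False True "opst (b, True) (act v s)"]
      by (simp add: r commutator_word_def word_inv_def)
    also have "\<dots> = act v s"
      using R1[of "act v s" b True, OF t] R1[of "opst (b,False) (opst (b, True) (act v s))" a True] op_St[OF t]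
        op_St[OF op_St[OF t], of "(b,False)"] t
      by simp
    finally have "act r (act v s) = act v s" .
    then show "act (u @ r @ v) s = act (u @ v) s" by (simp add: act_append)
  qed
qed auto

lemma act_red: "red u \<Longrightarrow> act u (proj []) = proj u"
proof (induction u)
  case Nil then show ?case by simp
next
  case (Cons l u)
  obtain v e where l: "l = (v,e)" by (cases l)
  then show ?case using Cons op_push[of v e u] by simp
qed

lemma proj_ne: "u \<noteq> [] \<Longrightarrow> proj u \<noteq> proj []"
proof
  assume "u \<noteq> []" "proj u = proj []"
  then obtain l u' where "u = l # u'" by (cases u) auto
  then have "proj u (fst l) (fst l) \<noteq> []" by (simp add: proj_def)
  then show False using \<open>proj u = proj []\<close> by (simp add: proj_def)
qed

end

lemma comm_pos:
  assumes r: "commutator_word [(a,False)] [(b,False)] \<in> R" and ab: "a \<in> X" "b \<in> X"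
    and pq: "p \<in> words X" "q \<in> words X"
  shows "(p @ (a,False) # (b,False) # q, p @ (b,False) # (a,False) # q) \<in> pres_rel X R"
proof -
  have rw: "commutator_word [(a,False)] [(b,False)] \<in> words X"
    using ab by (simp add: commutator_word_def word_inv_def)
  have 1: "(p @ commutator_word [(a,False)] [(b,False)] @ (b,False) # (a,False) # q,
            p @ (b,False) # (a,False) # q) \<in> pres_rel X R"
    using pres_rel.relator[OF _ _ r rw, of p "(b,False) # (a,False) # q"] pq ab by simp
  have 2: "(p @ (a,False) # (b,False) # (a,True) # (b,True) # (b,False) # (a,False) # q,
            p @ (a,False) # (b,False) # (a,True) # (a,False) # q) \<in> pres_rel X R"
    using pres_cancel'[of "p @ [(a,False),(b,False),(a,True)]" X "(a,False) # q" b True R] pq ab by simp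
  have 3: "(p @ (a,False) # (b,False) # (a,True) # (a,False) # q,
            p @ (a,False) # (b,False) # q) \<in> pres_rel X R"
    using pres_cancel'[of "p @ [(a,False),(b,False)]" X q a True R] pq ab by simp
  have "(p @ (a,False) # (b,False) # q, p @ commutator_word [(a,False)] [(b,False)] @ (b,False) # (a,False) # q) \<in> pres_rel X R"
    using pres_trans[OF 2 3] by (simp add: commutator_word_def word_inv_def pres_sym)
  then show ?thesis using 1 pres_trans by blast
qed

definition swapP :: "'g set \<Rightarrow> 'g word set \<Rightarrow> 'g \<times> bool \<Rightarrow> 'g \<times> bool \<Rightarrow> bool" where
  "swapP X R l z \<longleftrightarrow> (\<forall>p q. p \<in> words X \<longrightarrow> q \<in> words X \<longrightarrow> (p @ l # z # q, p @ z # l # q) \<in> pres_rel X R)"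

lemma swapP_sym: "swapP X R l z \<Longrightarrow> swapP X R z l"
  unfolding swapP_def using pres_sym by blast

lemma swapP_flip:
  assumes s: "swapP X R (a,al) z" and a: "a \<in> X" and z: "fst z \<in> X"
  shows "swapP X R (a, \<not>al) z"
  unfolding swapP_def
proof (intro allI impI)
  fix p q assume p: "p \<in> words X" and q: "q \<in> words X"
  have 1: "(p @ (a,\<not>al) # z # (a,al) # (a,\<not>al) # q, p @ (a,\<not>al) # z # q) \<in> pres_rel X R"
    using pres_cancel'[of "p @ [(a,\<not>al), z]" X q a al R] p q a z by simp
  have 2: "(p @ (a,\<not>al) # z # (a,al) # (a,\<not>al) # q, p @ (a,\<not>al) # (a,al) # z # (a,\<not>al) # q) \<in> pres_rel X R"
    using s[unfolded swapP_def, rule_format, of "p @ [(a,\<not>al)]" "(a,\<not>al) # q"] p q a z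
    by (simp add: pres_sym)
  have 3: "(p @ (a,\<not>al) # (a,al) # z # (a,\<not>al) # q, p @ z # (a,\<not>al) # q) \<in> pres_rel X R"
    using pres_cancel'[of p X "z # (a,\<not>al) # q" a "\<not>al" R] p q a z by simp
  show "(p @ (a, \<not> al) # z # q, p @ z # (a, \<not> al) # q) \<in> pres_rel X R"
    using 1 2 3 by (meson pres_sym pres_trans)
qed

lemma swapP_all:
  assumes r: "commutator_word [(a,False)] [(b,False)] \<in> R" and ab: "a \<in> X" "b \<in> X"
  shows "swapP X R (a,al) (b,be)"
proof -
  have 0: "swapP X R (a,False) (b,False)" using comm_pos[OF r ab] by (simp add: swapP_def)
  have 1: "swapP X R (a,al) (b,False)" using 0 swapP_flip[OF 0] ab by (cases al) auto
  have 2: "swapP X R (b,be) (a,al)" using swapP_flip[OF swapP_sym[OF 1]] ab by (cases be) (auto intro: swapP_sym[OF 1])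
  show ?thesis using swapP_sym[OF 2] .
qed

lemma swapP_same:
  assumes "a \<in> X" shows "swapP X R (a,al) (a,be)"
  unfolding swapP_def
proof (intro allI impI)
  fix p q assume p: "p \<in> words X" and q: "q \<in> words X"
  show "(p @ (a, al) # (a, be) # q, p @ (a, be) # (a, al) # q) \<in> pres_rel X R"
  proof (cases "al = be")
    case True then show ?thesis using p q assms by (simp add: pres_rel.refl)
  next
    case False
    then have "be = (\<not>al)" by auto
    have 1: "(p @ (a, al) # (a, be) # q, p @ q) \<in> pres_rel X R"
      using pres_cancel'[of p X q a al R] p q assms \<open>be = (\<not>al)\<close> by simp
    have 2: "(p @ (a, be) # (a, al) # q, p @ q) \<in> pres_rel X R"
      using pres_cancel'[of p X q a "\<not>al" R] p q assms \<open>be = (\<not>al)\<close> by simp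
    show ?thesis using pres_trans[OF 1 pres_sym[OF 2]] .
  qed
qed

lemma move_left:
  assumes "\<forall>z\<in>set m. swapP X R l z" "fst l \<in> X" "m \<in> words X"
  shows "p \<in> words X \<Longrightarrow> q \<in> words X \<Longrightarrow> (p @ m @ l # q, p @ l # m @ q) \<in> pres_rel X R"
  using assms
proof (induction m arbitrary: p)
  case Nil then show ?case by (simp add: pres_rel.refl)
next
  case (Cons z m)
  have 1: "((p @ [z]) @ m @ l # q, (p @ [z]) @ l # m @ q) \<in> pres_rel X R"
    using Cons.IH[of "p @ [z]"] Cons.prems by simp
  have 2: "(p @ z # l # m @ q, p @ l # z # m @ q) \<in> pres_rel X R"
    using Cons.prems by (simp add: swapP_def pres_sym)
  show ?case using pres_trans[OF 1] 2 by simp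
qed

lemma class_mult:
  assumes "a \<in> words X" "b \<in> words X"
  shows "pres_rel X R `` {a} \<otimes>\<^bsub>presented_group X R\<^esub> pres_rel X R `` {b} = pres_rel X R `` {a @ b}"
proof -
  let ?r = "pres_rel X R"
  have ea: "(SOME a'. a' \<in> ?r `` {a}) \<in> ?r `` {a}" by (rule someI[of _ a]) (simp add: assms pres_rel.refl)
  have eb: "(SOME b'. b' \<in> ?r `` {b}) \<in> ?r `` {b}" by (rule someI[of _ b]) (simp add: assms pres_rel.refl)
  have "(a @ b, (SOME a'. a' \<in> ?r `` {a}) @ (SOME b'. b' \<in> ?r `` {b})) \<in> ?r"
  proof -
    have 1: "(a, SOME a'. a' \<in> ?r `` {a}) \<in> ?r" using ea by simp
    have 2: "(b, SOME b'. b' \<in> ?r `` {b}) \<in> ?r" using eb by simp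
    have "(a @ b @ [], (SOME a'. a' \<in> ?r `` {a}) @ b @ []) \<in> ?r"
      using pres_rel_cong[OF 1, of "[]" "b"] assms by simp
    moreover have "((SOME a'. a' \<in> ?r `` {a}) @ b @ [], (SOME a'. a' \<in> ?r `` {a}) @ (SOME b'. b' \<in> ?r `` {b}) @ []) \<in> ?r"
      using pres_rel_cong[OF 2, of "SOME a'. a' \<in> ?r `` {a}" "[]"] pres_rel_words[OF 1] by simp
    ultimately show ?thesis using pres_trans by simp
  qed
  then have "?r `` {a @ b} = ?r `` {(SOME a'. a' \<in> ?r `` {a}) @ (SOME b'. b' \<in> ?r `` {b})}"
    using equiv_class_eq[OF equiv_pres] by blast
  then show ?thesis unfolding presented_group_def by simp
qed

locale hsetup =
  fixes V :: "'v set" and E :: "('v \<times> 'v) set" and x :: 'v and m :: nat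
  assumes sg: "simplicial_graph V E" and xV: "x \<in> V"

sublocale hsetup \<subseteq> gst E
  using sg by unfold_locales (auto simp: simplicial_graph_def)

context hsetup
begin

abbreviation "RG \<equiv> pc_relators V E"
abbreviation "relG \<equiv> pres_rel V RG"
abbreviation "XH \<equiv> ext_gens V m"
abbreviation "RH \<equiv> ext_relators V E x m"
abbreviation "relH \<equiv> pres_rel XH RH"

lemma EV: "(a,b) \<in> E \<Longrightarrow> a \<in> V \<and> b \<in> V" using sg by (auto simp: simplicial_graph_def)

definition nu :: "'v + nat \<Rightarrow> 'v" where "nu g = (case g of Inl v \<Rightarrow> v | Inr _ \<Rightarrow> x)"
lemma nu_simps[simp]: "nu (Inl v) = v" "nu (Inr i) = x" by (auto simp: nu_def)

definition xc :: "('v + nat) \<times> bool \<Rightarrow> bool" where "xc l \<longleftrightarrow> nu (fst l) = x"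
definition hcomm :: "('v + nat) \<times> bool \<Rightarrow> ('v + nat) \<times> bool \<Rightarrow> bool" where
  "hcomm l z \<longleftrightarrow> (xc l \<and> xc z) \<or> (nu (fst l), nu (fst z)) \<in> E"

lemma lift_comm: "lift_word (commutator_word u w) = commutator_word (lift_word u) (lift_word w)"
  by (simp add: lift_word_def commutator_word_def word_inv_def rev_map case_prod_beta)

lemma swapP_nil: "swapP X R l z \<Longrightarrow> ([l,z],[z,l]) \<in> pres_rel X R"
  unfolding swapP_def by (erule allE[of _ "[]"], erule allE[of _ "[]"]) simp

lemma G_swap: "(u,v) \<in> E \<Longrightarrow> ([(u,False),(v,False)], [(v,False),(u,False)]) \<in> relG"
proof -
  assume uv: "(u,v) \<in> E"
  have "commutator_word [(u,False)] [(v,False)] \<in> RG" using uv by (auto simp: pc_relators_def)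
  then have "swapP V RG (u,False) (v,False)" using swapP_all[of u v RG V False False] EV[OF uv] by simp
  then show ?thesis by (rule swapP_nil)
qed

lemma cent_rel:
  assumes "u \<in> V" "u = x \<or> (u,x) \<in> E" "i < m"
  shows "commutator_word [(Inr i,False)] [(Inl u,False)] \<in> RH"
proof -
  let ?cls = "\<lambda>w. relG `` {w}"
  have cw: "[(u,False)] \<in> words V" using assms by simp
  have xw: "[(x,False)] \<in> words V" using xV by simp
  have car: "?cls [(u,False)] \<in> carrier (pc_group V E)"
    using cw by (auto simp: pc_group_def presented_group_def quotient_def)
  have "?cls ([(u,False)] @ [(x,False)]) = ?cls ([(x,False)] @ [(u,False)])"
  proof (cases "u = x")
    case True then show ?thesis by simp
  next
    case False
    then have "(u,x) \<in> E" using assms by auto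
    then show ?thesis using equiv_class_eq[OF equiv_pres G_swap[of u x]] by simp
  qed
  then have "?cls [(u,False)] \<in> centralizer (pc_group V E) (?cls [(x,False)])"
    using car class_mult[OF cw xw, of RG] class_mult[OF xw cw, of RG]
    by (simp add: centralizer_def pc_group_def)
  then show ?thesis unfolding ext_relators_def using assms cw
    by (intro UnI2) (auto simp: lift_word_def intro!: exI[of _ "[(u,False)]"])
qed

lemma hcomm_swap:
  assumes l: "fst l \<in> XH" and z: "fst z \<in> XH" and h: "hcomm l z"
  shows "swapP XH RH l z"
proof -
  obtain g al where lg: "l = (g,al)" by (cases l)
  obtain k be where zk: "z = (k,be)" by (cases z)
  show ?thesis
  proof (cases "g = k")
    case True then show ?thesis using swapP_same l lg zk by simp
  next
    case False
    have gX: "g \<in> XH" and kX: "k \<in> XH" using l z lg zk by auto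
    show ?thesis
    proof (cases g)
      case (Inl u)
      show ?thesis
      proof (cases k)
        case (Inl v)
        have "(u,v) \<in> E" using h False \<open>g = Inl u\<close> \<open>k = Inl v\<close> lg zk by (auto simp: hcomm_def xc_def)
        then have "lift_word (commutator_word [(u,False)] [(v,False)]) \<in> lift_word ` RG"
          by (auto simp: pc_relators_def)
        then have "commutator_word [(g,False)] [(k,False)] \<in> RH"
          using \<open>g = Inl u\<close> \<open>k = Inl v\<close> lift_comm[of "[(u,False)]" "[(v,False)]"]
          unfolding ext_relators_def by (simp add: lift_word_def)
        then show ?thesis using swapP_all[of g k RH XH al be] gX kX lg zk by simp
      next
        case (Inr i)
        have "u = x \<or> (u,x) \<in> E" using h \<open>g = Inl u\<close> \<open>k = Inr i\<close> lg zk by (auto simp: hcomm_def xc_def)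
        moreover have "u \<in> V" "i < m" using gX kX \<open>g = Inl u\<close> \<open>k = Inr i\<close> by (auto simp: ext_gens_def)
        ultimately have "commutator_word [(k,False)] [(g,False)] \<in> RH"
          using cent_rel \<open>g = Inl u\<close> \<open>k = Inr i\<close> by simp
        then show ?thesis using swapP_all[of k g RH XH be al] gX kX lg zk swapP_sym by simp
      qed
    next
      case (Inr i)
      show ?thesis
      proof (cases k)
        case (Inl u)
        have "u = x \<or> (u,x) \<in> E" using h \<open>g = Inr i\<close> \<open>k = Inl u\<close> lg zk E_sym
          by (auto simp: hcomm_def xc_def)
        moreover have "u \<in> V" "i < m" using gX kX \<open>g = Inr i\<close> \<open>k = Inl u\<close> by (auto simp: ext_gens_def)
        ultimately have "commutator_word [(g,False)] [(k,False)] \<in> RH"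
          using cent_rel \<open>g = Inr i\<close> \<open>k = Inl u\<close> by simp
        then show ?thesis using swapP_all[of g k RH XH al be] gX kX lg zk by simp
      next
        case (Inr j)
        have "i < m" "j < m" using gX kX \<open>g = Inr i\<close> \<open>k = Inr j\<close> by (auto simp: ext_gens_def)
        then have "commutator_word [(g,False)] [(k,False)] \<in> RH"
          using \<open>g = Inr i\<close> \<open>k = Inr j\<close> by (auto simp: ext_relators_def)
        then show ?thesis using swapP_all[of g k RH XH al be] gX kX lg zk by simp
      qed
    qed
  qed
qed

end

context hsetup
begin

definition hvis :: "('v + nat) \<times> bool \<Rightarrow> ('v + nat) word \<Rightarrow> bool" where
  "hvis l r \<longleftrightarrow> (\<exists>p s. r = p @ linv l # s \<and> (\<forall>z\<in>set p. hcomm l z))"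

fun redH1 :: "('v + nat) word \<Rightarrow> bool" where
  "redH1 [] = True"
| "redH1 (l # r) = (\<not> hvis l r \<and> redH1 r)"

definition xgap :: "('v + nat) word \<Rightarrow> bool" where
  "xgap r \<longleftrightarrow> (\<exists>p l' s. r = p @ l' # s \<and> xc l' \<and> p \<noteq> [] \<and> (\<forall>z\<in>set p. \<not> xc z \<and> (x, nu (fst z)) \<in> E))"

fun redH2 :: "('v + nat) word \<Rightarrow> bool" where
  "redH2 [] = True"
| "redH2 (l # r) = ((xc l \<longrightarrow> \<not> xgap r) \<and> redH2 r)"

definition xcount :: "('v + nat) word \<Rightarrow> nat" where "xcount w = length (filter xc w)"

fun possum :: "('v + nat) word \<Rightarrow> nat" where
  "possum [] = 0"
| "possum (l # w) = possum w + xcount w"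

lemma xcount_simps[simp]: "xcount [] = 0" "xcount (l # w) = (if xc l then 1 else 0) + xcount w"
  "xcount (a @ b) = xcount a + xcount b"
  by (auto simp: xcount_def)

lemma possum_append: "possum (a @ b) = possum a + possum b + length a * xcount b"
  by (induction a) auto

lemma nox: "\<forall>z\<in>set p. \<not> xc z \<Longrightarrow> possum p = 0 \<and> xcount p = 0"
  by (induction p) auto

lemma not_redH1: "\<not> redH1 w \<Longrightarrow> \<exists>a l r. w = a @ l # r \<and> hvis l r"
proof (induction w)
  case Nil then show ?case by simp
next
  case (Cons l w)
  show ?case
  proof (cases "hvis l w")
    case True then show ?thesis by (intro exI[of _ "[]"]) auto
  next
    case False
    then have "\<not> redH1 w" using Cons.prems by simp
    then obtain a l' r where "w = a @ l' # r \<and> hvis l' r" using Cons.IH by blast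
    then show ?thesis by (intro exI[of _ "l # a"]) auto
  qed
qed

lemma not_redH2: "\<not> redH2 w \<Longrightarrow> \<exists>a l r. w = a @ l # r \<and> xc l \<and> xgap r"
proof (induction w)
  case Nil then show ?case by simp
next
  case (Cons l w)
  show ?case
  proof (cases "xc l \<and> xgap w")
    case True then show ?thesis by (intro exI[of _ "[]"]) auto
  next
    case False
    then have "\<not> redH2 w" using Cons.prems by auto
    then obtain a l' r where "w = a @ l' # r \<and> xc l' \<and> xgap r" using Cons.IH by blast
    then show ?thesis by (intro exI[of _ "l # a"]) auto
  qed
qed

lemma hcomm_linv: "hcomm (linv l) z = hcomm l z"
  by (simp add: hcomm_def xc_def linv_def)

lemma normalize:
  "w \<in> words XH \<Longrightarrow> \<exists>w'. (w,w') \<in> relH \<and> w' \<in> words XH \<and> redH1 w' \<and> redH2 w'"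
proof (induction w rule: wf_induct[OF wf_inv_image[OF wf_lex_prod[OF wf_less_than wf_less_than], of "\<lambda>w. (length w, possum w)"]])
  case (1 w)
  note IH = 1(1)[rule_format]
  show ?case
  proof (cases "redH1 w")
    case False
    then obtain a l r where w: "w = a @ l # r" and "hvis l r" using not_redH1 by blast
    then obtain p s where r: "r = p @ linv l # s" and p: "\<forall>z\<in>set p. hcomm l z"
      unfolding hvis_def by blast
    have ww: "a \<in> words XH" "fst l \<in> XH" "p \<in> words XH" "s \<in> words XH"
      using 1(2) w r by (auto simp: linv_def)
    have sw: "\<forall>z\<in>set p. swapP XH RH (linv l) z"
      using p ww hcomm_swap hcomm_linv by (auto simp: words_def linv_def)
    have m1: "(a @ l # p @ linv l # s, a @ l # linv l # p @ s) \<in> relH"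
      using move_left[OF sw _ ww(3), of "a @ [l]" s] ww by (simp add: linv_def)
    have m2: "(a @ l # linv l # (p @ s), a @ p @ s) \<in> relH"
      using pres_cancel'[of a XH "p @ s" "fst l" "snd l" RH] ww by (cases l) (simp add: linv_def)
    have rel: "(w, a @ p @ s) \<in> relH" using pres_trans[OF m1 m2] w r by simp
    have "(a @ p @ s, w) \<in> inv_image (less_than <*lex*> less_than) (\<lambda>w. (length w, possum w))"
      using w r by simp
    then obtain w' where "(a @ p @ s, w') \<in> relH" "w' \<in> words XH" "redH1 w'" "redH2 w'"
      using IH[of "a @ p @ s"] ww by auto
    then show ?thesis using rel pres_trans by blast
  next
    case True
    show ?thesis
    proof (cases "redH2 w")
      case True
      then show ?thesis using \<open>redH1 w\<close> 1(2) pres_rel.refl by blast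
    next
      case False
      then obtain a l r where w: "w = a @ l # r" and xl: "xc l" and "xgap r" using not_redH2 by blast
      then obtain p l' s where r: "r = p @ l' # s" and xl': "xc l'" and pne: "p \<noteq> []"
        and p: "\<forall>z\<in>set p. \<not> xc z \<and> (x, nu (fst z)) \<in> E"
        unfolding xgap_def by blast
      have ww: "a \<in> words XH" "fst l \<in> XH" "p \<in> words XH" "s \<in> words XH" "fst l' \<in> XH"
        using 1(2) w r by auto
      have sw: "\<forall>z\<in>set p. swapP XH RH l' z"
        using p ww hcomm_swap xl' by (auto simp: words_def hcomm_def xc_def)
      have rel: "(w, a @ l # l' # p @ s) \<in> relH"
        using move_left[OF sw ww(5) ww(3), of "a @ [l]" s] ww w r by simp
      have px: "possum p = 0" "xcount p = 0" using nox p by auto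
      have "possum (l' # p @ s) < possum (p @ l' # s)"
        using px pne xl' by (simp add: possum_append)
      then have "(a @ l # l' # p @ s, w) \<in> inv_image (less_than <*lex*> less_than) (\<lambda>w. (length w, possum w))"
        using w r px xl' pne by (simp add: possum_append)
      then obtain w' where "(a @ l # l' # p @ s, w') \<in> relH" "w' \<in> words XH" "redH1 w'" "redH2 w'"
        using IH[of "a @ l # l' # p @ s"] ww by auto
      then show ?thesis using rel pres_trans by blast
    qed
  qed
qed

end

context hsetup
begin

definition phiL :: "nat \<Rightarrow> ('v + nat) \<times> bool \<Rightarrow> ('v \<times> bool) list" where
  "phiL N l = (case fst l of Inl v \<Rightarrow> [(v, snd l)] | Inr i \<Rightarrow> replicate (N ^ Suc i) (x, snd l))"

definition phi :: "nat \<Rightarrow> ('v + nat) word \<Rightarrow> 'v word" where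
  "phi N w = concat (map (phiL N) w)"

lemma phi_Nil[simp]: "phi N [] = []" by (simp add: phi_def)
lemma phi_Cons[simp]: "phi N (l # w) = phiL N l @ phi N w" by (simp add: phi_def)
lemma phi_append[simp]: "phi N (u @ w) = phi N u @ phi N w" by (simp add: phi_def)

lemma phiL_Inl[simp]: "phiL N (Inl v, b) = [(v,b)]" by (simp add: phiL_def)
lemma phiL_Inr[simp]: "phiL N (Inr i, b) = replicate (N ^ Suc i) (x, b)" by (simp add: phiL_def)

lemma word_inv_replicate: "word_inv (replicate k (g,b)) = replicate k (g, \<not>b)"
  by (simp add: word_inv_def)

lemma phiL_linv: "phiL N (linv l) = word_inv (phiL N l)"
  by (cases l; case_tac a) (auto simp: linv_def word_inv_replicate word_inv_def)

lemma phi_word_inv: "phi N (word_inv w) = word_inv (phi N w)"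
  by (induction w) (auto simp: phiL_linv)

lemma phiL_words: "fst l \<in> XH \<Longrightarrow> phiL N l \<in> words V"
  using xV by (cases l; case_tac a) (auto simp: ext_gens_def words_def)

lemma phi_words: "w \<in> words XH \<Longrightarrow> phi N w \<in> words V"
  by (induction w) (auto simp: phiL_words)

lemma phi_lift[simp]: "phi N (lift_word c) = c"
  by (induction c) (auto simp: lift_word_def)

lemma relG_nil:
  assumes "(r, []) \<in> relG" "p \<in> words V" "q \<in> words V"
  shows "(p @ r @ q, p @ q) \<in> relG"
  using pres_rel_cong[OF assms] by simp

lemma xrep_comm:
  assumes "(c @ [(x,False)], [(x,False)] @ c) \<in> relG"
  shows "(c @ replicate k (x,False), replicate k (x,False) @ c) \<in> relG"
proof (induction k)
  case 0
  then show ?case using pres_rel_words[OF assms] by (simp add: pres_rel.refl)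
next
  case (Suc k)
  have cw: "c \<in> words V" using pres_rel_words[OF assms] by simp
  have 1: "(c @ replicate k (x,False) @ [(x,False)], replicate k (x,False) @ c @ [(x,False)]) \<in> relG"
    using pres_rel_cong[OF Suc, of "[]" "[(x,False)]"] xV by simp
  have 2: "(replicate k (x,False) @ c @ [(x,False)], replicate k (x,False) @ [(x,False)] @ c) \<in> relG"
    using pres_rel_cong[OF assms, of "replicate k (x,False)" "[]"] xV by (simp add: words_def)
  have "replicate (Suc k) (x,False) = replicate k (x,False) @ [(x,False)]"
    by (simp add: replicate_append_same)
  then show ?case using pres_trans[OF 1 2] by simp
qed

lemma phi_relator: "r \<in> RH \<Longrightarrow> (phi N r, []) \<in> relG"
proof -
  assume "r \<in> RH"
  then consider (a) r0 where "r = lift_word r0" "r0 \<in> RG"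
    | (b) i j where "r = commutator_word [(Inr i, False)] [(Inr j, False)]" "i < m" "j < m"
    | (c) i c where "r = commutator_word [(Inr i, False)] (lift_word c)" "i < m" "c \<in> words V"
        "relG `` {c} \<in> centralizer (pc_group V E) (relG `` {[(x, False)]})"
    unfolding ext_relators_def by blast
  then show ?thesis
  proof cases
    case a
    then obtain u v where r0: "r0 = commutator_word [(u,False)] [(v,False)]" "(u,v) \<in> E"
      by (auto simp: pc_relators_def)
    have "r0 \<in> words V" using r0 EV[OF r0(2)] by (simp add: commutator_word_def word_inv_def)
    then show ?thesis using a pres_rel.relator[of "[]" V "[]" r0 RG] by simp
  next
    case b
    let ?A = "replicate (N ^ Suc i) (x,False)" and ?B = "replicate (N ^ Suc j) (x,False)"
    have aw: "?A \<in> words V" "?B \<in> words V" using xV by (auto simp: words_def)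
    have AB: "?A @ ?B = ?B @ ?A" by (simp add: replicate_add[symmetric] add.commute)
    have "phi N r = (?A @ ?B) @ word_inv ?A @ word_inv ?B"
      using b phiL_linv[of N "(Inr i, False)"] phiL_linv[of N "(Inr j, False)"]
      by (simp add: commutator_word_def del: replicate.simps power.simps)
    then have "phi N r = ?B @ ?A @ word_inv ?A @ word_inv ?B" using AB by simp
    moreover have "(?B @ (?A @ word_inv ?A) @ word_inv ?B, ?B @ word_inv ?B) \<in> relG"
      using pres_free_cancel[of ?A V ?B "word_inv ?B" RG] aw by simp
    moreover have "(?B @ word_inv ?B, []) \<in> relG"
      using pres_free_cancel[of ?B V "[]" "[]" RG] aw by simp
    ultimately show ?thesis using pres_trans by (metis append.assoc)
  next
    case c
    let ?A = "replicate (N ^ Suc i) (x,False)"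
    have xw: "[(x,False)] \<in> words V" using xV by simp
    have aw: "?A \<in> words V" using xV by (simp add: words_def)
    have "relG `` {c} \<otimes>\<^bsub>pc_group V E\<^esub> relG `` {[(x, False)]} =
          relG `` {[(x, False)]} \<otimes>\<^bsub>pc_group V E\<^esub> relG `` {c}"
      using c(4) by (simp add: centralizer_def)
    then have "relG `` {c @ [(x,False)]} = relG `` {[(x,False)] @ c}"
      using class_mult[OF c(3) xw, of RG] class_mult[OF xw c(3), of RG] by (simp add: pc_group_def)
    then have "(c @ [(x,False)], [(x,False)] @ c) \<in> relG"
      using eq_equiv_class_iff[OF equiv_pres] c(3) xw by (metis words_append)
    then have cm: "(c @ ?A, ?A @ c) \<in> relG" by (rule xrep_comm)
    have "phi N r = ?A @ c @ word_inv ?A @ word_inv c"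
      using c phiL_linv[of N "(Inr i, False)"] by (simp add: commutator_word_def phi_word_inv del: replicate.simps power.simps)
    moreover have "(?A @ c @ (word_inv ?A @ word_inv c), c @ ?A @ (word_inv ?A @ word_inv c)) \<in> relG"
      using pres_rel_cong[OF pres_sym[OF cm], of "[]" "word_inv ?A @ word_inv c"] aw c(3) by simp
    moreover have "(c @ ?A @ word_inv ?A @ word_inv c, c @ word_inv c) \<in> relG"
      using pres_free_cancel[of ?A V c "word_inv c" RG] aw c(3) by simp
    moreover have "(c @ word_inv c, []) \<in> relG"
      using pres_free_cancel[of c V "[]" "[]" RG] c(3) by simp
    ultimately show ?thesis using pres_trans by (metis append.assoc)
  qed
qed

lemma phi_rel: "(u,v) \<in> relH \<Longrightarrow> (phi N u, phi N v) \<in> relG"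
proof (induction rule: pres_rel.induct)
  case (refl w) then show ?case by (simp add: phi_words pres_rel.refl)
next
  case (sym u v) show ?case by (rule pres_sym[OF sym.IH])
next
  case (trans u v w) show ?case by (rule pres_trans[OF trans.IH])
next
  case (cancel u v a b)
  have "phiL N (a, \<not> b) = word_inv (phiL N (a,b))" using phiL_linv[of N "(a,b)"] by (simp add: linv_def)
  then show ?case using pres_free_cancel[of "phiL N (a,b)" V "phi N u" "phi N v" RG] cancel
    phiL_words[of "(a,b)" N] phi_words by simp
next
  case (relator u v r)
  then show ?case using relG_nil[OF phi_relator[OF relator(3)], of "phi N u" "phi N v"] phi_words
    by simp
qed

end

context gst
begin

lemma vis_Cons: "vis v e (y # u) \<longleftrightarrow> y = (v,e) \<or> ((v, fst y) \<in> E \<and> vis v e u)"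
proof
  assume "vis v e (y # u)"
  then obtain p r where pr: "y # u = p @ (v,e) # r" and p: "\<forall>z\<in>set p. (v, fst z) \<in> E"
    by (auto simp: vis_def)
  show "y = (v,e) \<or> ((v, fst y) \<in> E \<and> vis v e u)"
  proof (cases p)
    case Nil then have "y # u = (v,e) # r" using pr by simp
    then show ?thesis by simp
  next
    case (Cons q p')
    then show ?thesis using pr p unfolding vis_def by auto
  qed
next
  assume "y = (v,e) \<or> ((v, fst y) \<in> E \<and> vis v e u)"
  then show "vis v e (y # u)"
  proof
    assume "y = (v,e)" then show ?thesis unfolding vis_def by (intro exI[of _ "[]"] exI[of _ u]) auto
  next
    assume a: "(v, fst y) \<in> E \<and> vis v e u"
    then obtain p r where "u = p @ (v,e) # r" "\<forall>z\<in>set p. (v, fst z) \<in> E"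
      by (auto simp: vis_def)
    then show ?thesis using a unfolding vis_def by (intro exI[of _ "y # p"] exI[of _ r]) auto
  qed
qed

lemma vis_append_block:
  assumes "vis v e (xs @ u)" "\<forall>y\<in>set xs. fst y = g" "v \<noteq> g" "xs \<noteq> []"
  shows "(v, g) \<in> E \<and> vis v e u"
  using assms
proof (induction xs)
  case Nil then show ?case by simp
next
  case (Cons y xs)
  have "(v, g) \<in> E \<and> vis v e (xs @ u)" using Cons.prems vis_Cons[of v e y "xs @ u"] by auto
  then show ?case using Cons by (cases xs) auto
qed

end

context hsetup
begin

definition xpow :: "int \<Rightarrow> ('v \<times> bool) list" where
  "xpow n = replicate (nat \<bar>n\<bar>) (x, n < 0)"

definition sgnb :: "bool \<Rightarrow> int" where "sgnb b = (if b then -1 else 1)"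

definition net :: "('v \<times> bool) list \<Rightarrow> int" where
  "net z = sum_list (map (\<lambda>l. sgnb (snd l)) z)"

lemma net_simps[simp]: "net [] = 0" "net (l # z) = sgnb (snd l) + net z" "net (a @ b) = net a + net b"
  by (auto simp: net_def)

lemma xpow_0[simp]: "xpow 0 = []" by (simp add: xpow_def)

lemma xpow_ne: "n \<noteq> 0 \<Longrightarrow> xpow n = (x, n < 0) # xpow (n - sgnb (n < 0))"
proof -
  assume "n \<noteq> 0"
  then have "nat \<bar>n\<bar> = Suc (nat \<bar>n - sgnb (n < 0)\<bar>)" using \<open>n \<noteq> 0\<close> unfolding sgnb_def by (cases "n < 0") auto
  moreover have "n - sgnb (n < 0) \<noteq> 0 \<Longrightarrow> (n - sgnb (n < 0) < 0) = (n < 0)"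
    using \<open>n \<noteq> 0\<close> by (auto simp: sgnb_def)
  ultimately show ?thesis unfolding xpow_def
    by (cases "n - sgnb (n < 0) = 0") auto
qed

lemma xblock:
  assumes ru: "red u" and nv: "\<forall>e. \<not> vis x e u" and zx: "\<forall>l\<in>set z. fst l = x"
  shows "act z (proj u) = proj (xpow (net z) @ u) \<and> red (xpow (net z) @ u)"
  using zx
proof (induction z)
  case Nil then show ?case using ru by simp
next
  case (Cons l z)
  obtain b where l: "l = (x,b)" using Cons.prems by (cases l) auto
  let ?n = "net z"
  have IH: "act z (proj u) = proj (xpow ?n @ u)" "red (xpow ?n @ u)" using Cons by auto
  show ?case
  proof (cases "?n = 0")
    case True
    have "opst (x,b) (proj u) = proj ((x,b) # u)" using op_push nv by blast
    moreover have "xpow (sgnb b) = [(x,b)]" by (cases b) (auto simp: xpow_def sgnb_def)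
    ultimately show ?thesis using IH True l nv ru by simp
  next
    case False
    have xs: "xpow ?n @ u = (x, ?n < 0) # (xpow (?n - sgnb (?n < 0)) @ u)" using xpow_ne[OF False] by simp
    show ?thesis
    proof (cases "(?n < 0) = (\<not> b)")
      case True
      have "opst (x,b) (proj (xpow ?n @ u)) = proj ([] @ xpow (?n - sgnb (?n < 0)) @ u)"
        using op_pop[of "xpow ?n @ u" "[]" x b] xs True by simp
      moreover have e: "?n - sgnb (?n < 0) = sgnb b + ?n" using True by (auto simp: sgnb_def)
      moreover have "red (xpow (sgnb b + ?n) @ u)" using IH(2) xs e by (metis red.simps(2))
      ultimately show ?thesis using IH l by simp
    next
      case False2: False
      then have b: "b = (?n < 0)" by auto
      have nvis: "\<not> vis x (\<not> b) (xpow ?n @ u)" using xs b vis_Cons by simp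
      have "opst (x,b) (proj (xpow ?n @ u)) = proj ((x,b) # xpow ?n @ u)" using op_push nvis by blast
      moreover have eq: "(x,b) # xpow ?n @ u = xpow (sgnb b + ?n) @ u"
      proof -
        have "nat \<bar>sgnb b + ?n\<bar> = Suc (nat \<bar>?n\<bar>)" "(sgnb b + ?n < 0) = b"
          using b False by (auto simp: sgnb_def)
        then show ?thesis using b by (simp add: xpow_def)
      qed
      moreover have "red (xpow (sgnb b + ?n) @ u)" using IH(2) nvis eq[symmetric] by simp
      ultimately show ?thesis using IH l by simp
    qed
  qed
qed

end

context hsetup
begin

lemma xc_cases: "xc l \<Longrightarrow> fst l = Inl x \<or> (\<exists>i. fst l = Inr i)"
  by (cases "fst l") (auto simp: xc_def)

definition ex :: "('v + nat) \<times> bool \<Rightarrow> nat" where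
  "ex l = (case fst l of Inl _ \<Rightarrow> 0 | Inr i \<Rightarrow> Suc i)"

fun PR :: "('v + nat) word \<Rightarrow> int poly" where
  "PR [] = 0"
| "PR (l # R) = monom (sgnb (snd l)) (ex l) + PR R"

lemma net_replicate: "net (replicate k l) = int k * sgnb (snd l)"
  by (induction k) (auto simp: algebra_simps)

lemma poly_PR: "\<forall>l\<in>set R. xc l \<Longrightarrow> poly (PR R) (int N) = net (phi N R)"
proof (induction R)
  case Nil then show ?case by simp
next
  case (Cons l R)
  obtain g b where l: "l = (g,b)" by (cases l)
  have "xc l" using Cons by simp
  then have "g = Inl x \<or> (\<exists>i. g = Inr i)" using xc_cases[of l] l by simp
  then have "poly (monom (sgnb b) (ex l)) (int N) = net (phiL N l)"
    using l by (auto simp: ex_def poly_monom net_replicate)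
  then show ?case using Cons l by simp
qed

lemma ex_eq: "xc l \<Longrightarrow> xc l' \<Longrightarrow> ex l = ex l' \<longleftrightarrow> fst l = fst l'"
  using xc_cases[of l] xc_cases[of l'] by (auto simp: ex_def)

lemma coeff_PR:
  assumes "\<forall>l\<in>set R. xc l \<and> (fst l = g \<longrightarrow> snd l = c)" "xc (g,c)"
  shows "coeff (PR R) (ex (g,c)) = sgnb c * int (length (filter (\<lambda>l. fst l = g) R))"
  using assms
proof (induction R)
  case Nil then show ?case by simp
next
  case (Cons l R)
  have "xc l" using Cons.prems by simp
  then have "coeff (monom (sgnb (snd l)) (ex l)) (ex (g,c)) = (if fst l = g then sgnb c else 0)"
    using ex_eq[of l "(g,c)"] Cons.prems by (auto simp: coeff_monom)
  then show ?case using Cons by (simp add: algebra_simps)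
qed

lemma PR_ne:
  assumes "\<forall>l\<in>set R. xc l" "xc l0" "\<forall>l\<in>set R. fst l = fst l0 \<longrightarrow> snd l = snd l0"
  shows "PR (l0 # R) \<noteq> 0"
proof -
  have "coeff (PR (l0 # R)) (ex (fst l0, snd l0)) = sgnb (snd l0) * int (length (filter (\<lambda>l. fst l = fst l0) (l0 # R)))"
    using coeff_PR[of "l0 # R" "fst l0" "snd l0"] assms by auto
  moreover have "sgnb (snd l0) \<noteq> 0" by (simp add: sgnb_def)
  moreover have "length (filter (\<lambda>l. fst l = fst l0) (l0 # R)) \<noteq> 0" by simp
  ultimately have "coeff (PR (l0 # R)) (ex (fst l0, snd l0)) \<noteq> 0" by simp
  then show ?thesis by (metis coeff_0)
qed

lemma finite_roots_nat: "(p :: int poly) \<noteq> 0 \<Longrightarrow> finite {N :: nat. poly p (int N) = 0}"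
proof -
  assume "p \<noteq> 0"
  then have "finite {y. poly p y = 0}" by (rule poly_roots_finite)
  then have "finite (int -` {y. poly p y = 0})" by (rule finite_vimageI) (simp add: inj_on_def)
  then show ?thesis by (simp add: vimage_def)
qed

lemma redH1_append: "redH1 (a @ b) \<Longrightarrow> redH1 b" by (induction a) auto
lemma redH2_append: "redH2 (a @ b) \<Longrightarrow> redH2 b" by (induction a) auto
lemma redH2_last: "redH2 (a @ l # b) \<Longrightarrow> xc l \<Longrightarrow> \<not> xgap b" by (induction a) auto

definition V1 :: "('v \<times> bool) list \<Rightarrow> ('v + nat) word \<Rightarrow> bool" where
  "V1 u w \<longleftrightarrow> (\<forall>v e. v \<noteq> x \<longrightarrow> vis v e u \<longrightarrow>
     (\<exists>p r. w = p @ (Inl v, e) # r \<and> (\<forall>z\<in>set p. (v, nu (fst z)) \<in> E)))"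

definition V2 :: "('v \<times> bool) list \<Rightarrow> ('v + nat) word \<Rightarrow> bool" where
  "V2 u w \<longleftrightarrow> (\<forall>e. vis x e u \<longrightarrow>
     (\<exists>p l r. w = p @ l # r \<and> xc l \<and> (\<forall>z\<in>set p. \<not> xc z \<and> (x, nu (fst z)) \<in> E)))"

definition good :: "nat \<Rightarrow> ('v + nat) word \<Rightarrow> ('v \<times> bool) list \<Rightarrow> bool" where
  "good N w u \<longleftrightarrow> act (phi N w) (proj []) = proj u \<and> red u \<and> (u = [] \<longleftrightarrow> w = []) \<and> V1 u w \<and> V2 u w"

lemma step_nonx:
  assumes g: "good N w u" and l: "l = (Inl v, b)" "v \<noteq> x" and r1: "redH1 (l # w)"
  shows "good N (l # w) ((v,b) # u)"
proof -
  have nv: "\<not> vis v (\<not> b) u"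
  proof
    assume "vis v (\<not> b) u"
    then obtain p r where "w = p @ (Inl v, \<not>b) # r" "\<forall>z\<in>set p. (v, nu (fst z)) \<in> E"
      using g l unfolding good_def V1_def by blast
    then have "hvis l w" using l unfolding hvis_def hcomm_def linv_def by auto
    then show False using r1 by simp
  qed
  have act: "act (phi N (l # w)) (proj []) = proj ((v,b) # u)"
    using g l op_push[OF nv] by (simp add: good_def act_append)
  have V1: "V1 ((v,b) # u) (l # w)"
    unfolding V1_def
  proof (intro allI impI)
    fix v2 e assume v2: "v2 \<noteq> x" and vi: "vis v2 e ((v,b) # u)"
    show "\<exists>p r. l # w = p @ (Inl v2, e) # r \<and> (\<forall>z\<in>set p. (v2, nu (fst z)) \<in> E)"
    proof (cases "(v,b) = (v2,e)")
      case True then show ?thesis using l by (intro exI[of _ "[]"] exI[of _ w]) auto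
    next
      case False
      then have "(v2, v) \<in> E" "vis v2 e u" using vi vis_Cons by auto
      then obtain p r where "w = p @ (Inl v2, e) # r" "\<forall>z\<in>set p. (v2, nu (fst z)) \<in> E"
        using g v2 unfolding good_def V1_def by blast
      then show ?thesis using l \<open>(v2, v) \<in> E\<close> by (intro exI[of _ "l # p"] exI[of _ r]) auto
    qed
  qed
  have V2: "V2 ((v,b) # u) (l # w)"
    unfolding V2_def
  proof (intro allI impI)
    fix e assume vi: "vis x e ((v,b) # u)"
    then have "(x, v) \<in> E" "vis x e u" using vis_Cons l by auto
    then obtain p l' r where "w = p @ l' # r" "xc l'" "\<forall>z\<in>set p. \<not> xc z \<and> (x, nu (fst z)) \<in> E"
      using g unfolding good_def V2_def by blast
    then show "\<exists>p l' r. l # w = p @ l' # r \<and> xc l' \<and> (\<forall>z\<in>set p. \<not> xc z \<and> (x, nu (fst z)) \<in> E)"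
      using l \<open>(x, v) \<in> E\<close> by (intro exI[of _ "l # p"] exI[of _ l'] exI[of _ r]) (auto simp: xc_def)
  qed
  have "red ((v,b) # u)" using g nv by (simp add: good_def)
  then show ?thesis using act V1 V2 by (simp add: good_def)
qed

end

context hsetup
begin

lemma phiL_x: "xc l \<Longrightarrow> y \<in> set (phiL N l) \<Longrightarrow> fst y = x"
  using xc_cases[of l] by (cases l) auto

lemma phi_x: "\<forall>l\<in>set R. xc l \<Longrightarrow> \<forall>y\<in>set (phi N R). fst y = x"
  using phiL_x by (auto simp: phi_def)

lemma step_run:
  assumes w: "w = R @ w'" and Rne: "R \<noteq> []" and Rx: "\<forall>l\<in>set R. xc l"
    and hd: "w' = [] \<or> \<not> xc (hd w')" and r2: "redH2 w"
    and g: "good N w' u'" and pn: "poly (PR R) (int N) \<noteq> 0"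
  shows "good N w (xpow (net (phi N R)) @ u')"
proof -
  let ?n = "net (phi N R)"
  have n0: "?n \<noteq> 0" using pn poly_PR[OF Rx] by simp
  have nv: "\<forall>e. \<not> vis x e u'"
  proof (intro allI notI)
    fix e assume "vis x e u'"
    then obtain p l r where wp: "w' = p @ l # r" and xl: "xc l" and p: "\<forall>z\<in>set p. \<not> xc z \<and> (x, nu (fst z)) \<in> E"
      using g unfolding good_def V2_def by blast
    have "p \<noteq> []" using hd wp xl by auto
    then have xg: "xgap w'" unfolding xgap_def using wp xl p by blast
    have "R = butlast R @ [last R]" using Rne by simp
    then have "redH2 (butlast R @ last R # w')" using r2 w by (metis append.assoc append_Cons append_Nil)
    moreover have "xc (last R)" using Rx Rne by simp
    ultimately show False using redH2_last xg by blast
  qed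
  have red': "red u'" using g by (simp add: good_def)
  have xb: "act (phi N R) (proj u') = proj (xpow ?n @ u')" "red (xpow ?n @ u')"
    using xblock[OF red' nv phi_x[OF Rx]] by auto
  have act: "act (phi N w) (proj []) = proj (xpow ?n @ u')"
    using g xb w by (simp add: good_def act_append)
  obtain c rest where xs: "xpow ?n = (x,c) # rest" using xpow_ne[OF n0] by blast
  have xall: "\<forall>y\<in>set (xpow ?n). fst y = x" by (simp add: xpow_def)
  have V1: "V1 (xpow ?n @ u') w"
    unfolding V1_def
  proof (intro allI impI)
    fix v e assume vx: "v \<noteq> x" and vi: "vis v e (xpow ?n @ u')"
    have "(v,x) \<in> E \<and> vis v e u'" using vis_append_block[OF vi xall vx] xs by simp
    then obtain p r where "w' = p @ (Inl v, e) # r" "\<forall>z\<in>set p. (v, nu (fst z)) \<in> E"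
      using g vx unfolding good_def V1_def by blast
    then show "\<exists>p r. w = p @ (Inl v, e) # r \<and> (\<forall>z\<in>set p. (v, nu (fst z)) \<in> E)"
      using w Rx \<open>(v,x) \<in> E \<and> vis v e u'\<close> by (intro exI[of _ "R @ p"] exI[of _ r]) (auto simp: xc_def)
  qed
  have V2: "V2 (xpow ?n @ u') w"
    unfolding V2_def
  proof (intro allI impI)
    fix e assume "vis x e (xpow ?n @ u')"
    obtain l R1 where "R = l # R1" using Rne by (cases R) auto
    then show "\<exists>p l r. w = p @ l # r \<and> xc l \<and> (\<forall>z\<in>set p. \<not> xc z \<and> (x, nu (fst z)) \<in> E)"
      using w Rx by (intro exI[of _ "[]"] exI[of _ l] exI[of _ "R1 @ w'"]) auto
  qed
  show ?thesis using act xb V1 V2 xs w Rne by (simp add: good_def)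
qed

lemma main2b:
  "w \<in> words XH \<Longrightarrow> redH1 w \<Longrightarrow> redH2 w \<Longrightarrow> \<exists>B. finite B \<and> (\<forall>N. N \<notin> B \<longrightarrow> (\<exists>u. good N w u))"
proof (induction "length w" arbitrary: w rule: less_induct)
  case less
  show ?case
  proof (cases w)
    case Nil
    have "good N [] []" for N by (simp add: good_def V1_def V2_def vis_def)
    then show ?thesis using Nil by (intro exI[of _ "{}"]) auto
  next
    case (Cons l w0)
    show ?thesis
    proof (cases "xc l")
      case False
      obtain g b where l: "l = (g,b)" by (cases l)
      have "g \<in> XH" using less.prems Cons l by simp
      have "\<not> xc (g,b)" using False l by simp
      then obtain v where gv: "g = Inl v" "v \<noteq> x" by (cases g) (auto simp: xc_def)
      have w0: "w0 \<in> words XH" "redH1 w0" "redH2 w0" "length w0 < length w" using less.prems Cons by auto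
      obtain B where B: "finite B" "\<forall>N. N \<notin> B \<longrightarrow> (\<exists>u. good N w0 u)"
        using less.hyps[OF w0(4) w0(1-3)] by blast
      have ll: "l = (Inl v, b)" using gv l by simp
      have r1: "redH1 (l # w0)" using less.prems Cons by simp
      have "\<forall>N. N \<notin> B \<longrightarrow> (\<exists>u. good N w u)"
      proof (intro allI impI)
        fix N assume "N \<notin> B"
        then obtain u where "good N w0 u" using B(2) by blast
        then have "good N (l # w0) ((v,b) # u)" using step_nonx[OF _ ll gv(2) r1] by blast
        then show "\<exists>u. good N w u" using Cons by blast
      qed
      then show ?thesis using B(1) by (intro exI[of _ B]) auto
    next
      case True
      define R where "R = takeWhile xc w"
      define w' where "w' = dropWhile xc w"
      have w: "w = R @ w'" by (simp add: R_def w'_def)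
      have R: "R = l # takeWhile xc w0" using True Cons by (simp add: R_def)
      have Rx: "\<forall>l\<in>set R. xc l" unfolding R_def by (meson set_takeWhileD)
      have hd: "w' = [] \<or> \<not> xc (hd w')" unfolding w'_def using hd_dropWhile by blast
      have lt: "length w' < length w" using w R by simp
      have w'w: "w' \<in> words XH" "redH1 w'" "redH2 w'"
        using less.prems w redH1_append[of R w'] redH2_append[of R w'] by auto
      obtain B where B: "finite B" "\<forall>N. N \<notin> B \<longrightarrow> (\<exists>u. good N w' u)"
        using less.hyps[OF lt w'w] by blast
      have nl: "\<forall>l'\<in>set (takeWhile xc w0). fst l' = fst l \<longrightarrow> snd l' = snd l"
      proof (intro ballI impI)
        fix l' assume l': "l' \<in> set (takeWhile xc w0)" "fst l' = fst l"
        show "snd l' = snd l"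
        proof (rule ccontr)
          assume "snd l' \<noteq> snd l"
          then have li: "l' = linv l" using l' by (cases l; cases l') (auto simp: linv_def)
          obtain p s where ps: "takeWhile xc w0 = p @ l' # s" using split_list[OF l'(1)] by blast
          have "\<forall>z\<in>set p. xc z" using ps Rx R by auto
          then have "\<forall>z\<in>set p. hcomm l z" using True by (simp add: hcomm_def)
          moreover have "w0 = p @ linv l # (s @ w')" using w R ps li Cons by simp
          ultimately have "hvis l w0" unfolding hvis_def by blast
          then show False using less.prems Cons by simp
        qed
      qed
      have PRne: "PR R \<noteq> 0" using PR_ne[of "takeWhile xc w0" l] Rx R True nl by simp
      let ?B = "B \<union> {N. poly (PR R) (int N) = 0}"
      have "finite ?B" using B(1) finite_roots_nat[OF PRne] by simp
      moreover have "\<forall>N. N \<notin> ?B \<longrightarrow> (\<exists>u. good N w u)"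
      proof (intro allI impI)
        fix N assume "N \<notin> ?B"
        then obtain u' where "good N w' u'" "poly (PR R) (int N) \<noteq> 0" using B(2) by blast
        moreover have "R \<noteq> []" using R by simp
        ultimately have "good N w (xpow (net (phi N R)) @ u')"
          using step_run[OF w _ Rx hd less.prems(3)] by blast
        then show "\<exists>u. good N w u" by blast
      qed
      ultimately show ?thesis by blast
    qed
  qed
qed

end

context hsetup
begin

definition hN :: "nat \<Rightarrow> ('v + nat) word set \<Rightarrow> 'v word set" where
  "hN N A = relG `` {phi N (SOME a. a \<in> A)}"

lemma ext_eq: "ext_group V E x m = presented_group XH RH" by (simp add: ext_group_def)

lemma carrier_H: "carrier (ext_group V E x m) = words XH // relH"
  by (simp add: ext_group_def presented_group_def)

lemma carrier_G: "carrier (pc_group V E) = words V // relG"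
  by (simp add: pc_group_def presented_group_def)

lemma some_rep:
  assumes "A \<in> words XH // relH"
  shows "(SOME a. a \<in> A) \<in> words XH \<and> A = relH `` {SOME a. a \<in> A}"
proof -
  obtain a where a: "a \<in> words XH" "A = relH `` {a}" using assms by (auto elim: quotientE)
  have "a \<in> A" using a pres_rel.refl by auto
  then have s: "(SOME a. a \<in> A) \<in> A" by (rule someI)
  then have "(a, SOME a. a \<in> A) \<in> relH" using a by simp
  then show ?thesis using a equiv_class_eq[OF equiv_pres] pres_rel_words by blast
qed

lemma hN_class:
  assumes "a \<in> words XH"
  shows "hN N (relH `` {a}) = relG `` {phi N a}"
proof -
  have "a \<in> relH `` {a}" using assms pres_rel.refl by auto
  then have "(SOME a'. a' \<in> relH `` {a}) \<in> relH `` {a}" by (rule someI)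
  then have "(a, SOME a'. a' \<in> relH `` {a}) \<in> relH" by simp
  then have "(phi N a, phi N (SOME a'. a' \<in> relH `` {a})) \<in> relG" by (rule phi_rel)
  then have "relG `` {phi N a} = relG `` {phi N (SOME a'. a' \<in> relH `` {a})}"
    by (rule equiv_class_eq[OF equiv_pres])
  then show ?thesis unfolding hN_def by simp
qed

lemma hN_hom: "hN N \<in> hom (ext_group V E x m) (pc_group V E)"
proof (rule homI)
  fix A assume "A \<in> carrier (ext_group V E x m)"
  then have r: "(SOME a. a \<in> A) \<in> words XH \<and> A = relH `` {SOME a. a \<in> A}"
    using some_rep carrier_H by simp
  then have "hN N A = relG `` {phi N (SOME a. a \<in> A)}" by (simp add: hN_def)
  then show "hN N A \<in> carrier (pc_group V E)"
    using r phi_words carrier_G by (auto intro: quotientI)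
next
  fix A B assume A: "A \<in> carrier (ext_group V E x m)" and B: "B \<in> carrier (ext_group V E x m)"
  obtain a where a: "a \<in> words XH" "A = relH `` {a}" using some_rep A carrier_H by blast
  obtain b where b: "b \<in> words XH" "B = relH `` {b}" using some_rep B carrier_H by blast
  have "A \<otimes>\<^bsub>ext_group V E x m\<^esub> B = relH `` {a @ b}"
    using class_mult[OF a(1) b(1), of RH] a b ext_eq by simp
  then have "hN N (A \<otimes>\<^bsub>ext_group V E x m\<^esub> B) = relG `` {phi N a @ phi N b}"
    using hN_class a b by simp
  also have "\<dots> = relG `` {phi N a} \<otimes>\<^bsub>pc_group V E\<^esub> relG `` {phi N b}"
    using class_mult[OF phi_words[OF a(1)] phi_words[OF b(1)], of RG] by (simp add: pc_group_def)
  also have "\<dots> = hN N A \<otimes>\<^bsub>pc_group V E\<^esub> hN N B" using hN_class a b by simp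
  finally show "hN N (A \<otimes>\<^bsub>ext_group V E x m\<^esub> B) = hN N A \<otimes>\<^bsub>pc_group V E\<^esub> hN N B" .
qed

lemma RG_sub: "RG \<subseteq> {commutator_word [(a,False)] [(b,False)] | a b. (a,b) \<in> E}"
  by (auto simp: pc_relators_def)

lemma pairsep:
  assumes A: "A \<in> carrier (ext_group V E x m)" and B: "B \<in> carrier (ext_group V E x m)" and ne: "A \<noteq> B"
  shows "\<exists>Bd. finite Bd \<and> (\<forall>N. N \<notin> Bd \<longrightarrow> hN N A \<noteq> hN N B)"
proof -
  obtain a where a: "a \<in> words XH" "A = relH `` {a}" using some_rep A carrier_H by blast
  obtain b where b: "b \<in> words XH" "B = relH `` {b}" using some_rep B carrier_H by blast
  have nab: "(a,b) \<notin> relH"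
  proof
    assume "(a,b) \<in> relH"
    then have "relH `` {a} = relH `` {b}" by (rule equiv_class_eq[OF equiv_pres])
    then show False using ne a b by simp
  qed
  define c where "c = a @ word_inv b"
  have cw: "c \<in> words XH" using a b by (simp add: c_def)
  obtain c' where c': "(c,c') \<in> relH" "c' \<in> words XH" "redH1 c'" "redH2 c'"
    using normalize[OF cw] by blast
  obtain Bd where Bd: "finite Bd" "\<forall>N. N \<notin> Bd \<longrightarrow> (\<exists>u. good N c' u)"
    using main2b[OF c'(2-4)] by blast
  have cne: "c' \<noteq> []"
  proof
    assume "c' = []"
    then have "(c, []) \<in> relH" using c' by simp
    then have "([] @ c @ b, [] @ [] @ b) \<in> relH" using pres_rel_cong[of c "[]" XH RH "[]" b] b by simp
    then have 1: "(a @ word_inv b @ b, b) \<in> relH" by (simp add: c_def)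
    have "(a @ word_inv b @ word_inv (word_inv b) @ [], a @ []) \<in> relH"
      using pres_free_cancel[of "word_inv b" XH a "[]" RH] a b by simp
    then have 2: "(a @ word_inv b @ b, a) \<in> relH" by simp
    show False using pres_trans[OF pres_sym[OF 2] 1] nab by simp
  qed
  have "\<forall>N. N \<notin> Bd \<longrightarrow> hN N A \<noteq> hN N B"
  proof (intro allI impI notI)
    fix N assume "N \<notin> Bd" and eq: "hN N A = hN N B"
    then obtain u where g: "good N c' u" using Bd by blast
    have pa: "phi N a \<in> words V" "phi N b \<in> words V" using a b phi_words by auto
    have "relG `` {phi N a} = relG `` {phi N b}" using eq hN_class a b by simp
    then have "(phi N a, phi N b) \<in> relG" using eq_equiv_class_iff[OF equiv_pres pa] by blast
    then have "([] @ phi N a @ word_inv (phi N b), [] @ phi N b @ word_inv (phi N b)) \<in> relG"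
      using pres_rel_cong[of "phi N a" "phi N b" V RG "[]" "word_inv (phi N b)"] pa by simp
    moreover have "(phi N b @ word_inv (phi N b) @ [], []) \<in> relG"
      using pres_free_cancel[of "phi N b" V "[]" "[]" RG] pa by simp
    ultimately have "(phi N a @ word_inv (phi N b), []) \<in> relG" using pres_trans by simp
    then have pc: "(phi N c, []) \<in> relG" by (simp add: c_def phi_word_inv)
    have "(phi N c, phi N c') \<in> relG" using phi_rel c'(1) by blast
    then have "(phi N c', []) \<in> relG" using pres_trans[OF pres_sym pc] by blast
    then have "act (phi N c') (proj []) = act [] (proj [])"
      using act_rel[OF _ RG_sub] proj_nil_St by blast
    then have "proj u = proj []" using g by (simp add: good_def)
    moreover have "u \<noteq> []" using g cne by (simp add: good_def)
    ultimately show False using proj_ne by blast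
  qed
  then show ?thesis using Bd(1) by blast
qed

lemma disc: "discriminated_by (ext_group V E x m) (pc_group V E)"
  unfolding discriminated_by_def
proof (intro allI impI)
  fix S assume S: "S \<subseteq> carrier (ext_group V E x m) \<and> finite S"
  let ?P = "{(A,B). A \<in> S \<and> B \<in> S \<and> A \<noteq> B}"
  have fP: "finite ?P" using S by (auto intro: finite_subset[of _ "S \<times> S"])
  have "\<forall>p\<in>?P. \<exists>Bd. finite Bd \<and> (\<forall>N. N \<notin> Bd \<longrightarrow> hN N (fst p) \<noteq> hN N (snd p))"
    using pairsep S by auto
  from bchoice[OF this] obtain f where f: "\<forall>p\<in>?P. finite (f p) \<and> (\<forall>N. N \<notin> f p \<longrightarrow> hN N (fst p) \<noteq> hN N (snd p))"
    by blast
  have "finite (\<Union>(f ` ?P))" using fP f by auto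
  then obtain N where N: "N \<notin> \<Union>(f ` ?P)" using ex_new_if_finite[OF infinite_UNIV_nat] by blast
  have "inj_on (hN N) S"
  proof (rule inj_onI, rule ccontr)
    fix A B assume "A \<in> S" "B \<in> S" "hN N A = hN N B" "A \<noteq> B"
    then have "(A,B) \<in> ?P" by simp
    then show False using f N \<open>hN N A = hN N B\<close> by fastforce
  qed
  then show "\<exists>h\<in>hom (ext_group V E x m) (pc_group V E). inj_on h S" using hN_hom by blast
qed

end

theorem lemma4p1:
  fixes V :: "'v set" and E :: "('v \<times> 'v) set" and x :: 'v and n :: nat
  assumes "simplicial_graph V E"
    and "x \<in> V"
    and "n \<ge> 2"
  shows "discriminated_by (ext_group V E x (n - 1)) (pc_group V E)"
proof -
  interpret hsetup V E x "n - 1" using assms by unfold_locales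
  show ?thesis by (rule disc)
qed

end
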